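(* Let $\epsilon>0$, $\delta>0$, and let $\rho$ be a pure $n$-qubit state. Then $N=O(n\log(1/\delta)/\epsilon^2)$ pairs of copies $\rho\otimes\rho$ suffice to produce, with probability $1-\delta$, simultaneously for all $x=(v_1,w_1,\dots,v_n,w_n)\in\{0,1\}^{2n}$ and all $1\le k\le n$: estimates $\pi_\rho(v_1,w_1,\dots,v_k,w_k)$ with $|\pi_\rho(v_1,w_1,\dots,v_k,w_k)-p_\rho(v_1,w_1,\dots,v_k,w_k)|\le\epsilon/2^k$, and estimates $\pi_\rho(v_1,w_1,\dots,v_k)$ with $|\pi_\rho(v_1,w_1,\dots,v_k)-p_\rho(v_1,w_1,\dots,v_k)|\le 2\epsilon/2^k$.
   Context: Pauli strings are labelled by $x=(v_1,w_1,\dots,v_n,w_n)\in\{0,1\}^{2n}$ via $P_x=i^{v\cdot w}(X^{v_1}Z^{w_1})\otimes\cdots\otimes(X^{v_n}Z^{w_n})$. The Pauli distribution of a pure state is $p_\rho(x)=\mathrm{tr}(\rho P_x)^2/2^n$, viewed as a distribution on bit strings of length $2n$; $p_\rho(v_1,w_1,\dots,v_k,w_k)$ and $p_\rho(v_1,w_1,\dots,v_k)$ denote its marginals on the first $2k$ and first $2k-1$ bits respectively (sums over all remaining bits). *)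

theory Defs
  imports "Jordan_Normal_Form.Matrix"
begin

text \<open>Kronecker (tensor) product; the first factor is the most significant index.\<close>
definition kron :: "complex mat \<Rightarrow> complex mat \<Rightarrow> complex mat" where
  "kron A B = mat (dim_row A * dim_row B) (dim_col A * dim_col B)
     (\<lambda>(i, j). A $$ (i div dim_row B, j div dim_col B) * B $$ (i mod dim_row B, j mod dim_col B))"

definition mtrace :: "complex mat \<Rightarrow> complex" where
  "mtrace A = (\<Sum>i<dim_row A. A $$ (i, i))"

definition psd_mat :: "nat \<Rightarrow> complex mat \<Rightarrow> bool" where
  "psd_mat d A \<longleftrightarrow> A \<in> carrier_mat d d \<and>
     (\<forall>v \<in> carrier_vec d. Im ((A *\<^sub>v v) \<bullet> conjugate v) = 0 \<and> Re ((A *\<^sub>v v) \<bullet> conjugate v) \<ge> 0)"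

definition is_povm :: "nat \<Rightarrow> complex mat list \<Rightarrow> bool" where
  "is_povm d Ms \<longleftrightarrow> (\<forall>M \<in> set Ms. psd_mat d M) \<and> foldr (+) Ms (0\<^sub>m d d) = 1\<^sub>m d"

text \<open>Pure n-qubit states are unit vectors psi in C^(2^n); rho = |psi><psi|.\<close>
definition pure_state :: "nat \<Rightarrow> complex vec \<Rightarrow> bool" where
  "pure_state n \<psi> \<longleftrightarrow> \<psi> \<in> carrier_vec (2 ^ n) \<and> \<psi> \<bullet> conjugate \<psi> = 1"

definition density :: "complex vec \<Rightarrow> complex mat" where
  "density \<psi> = mat (dim_vec \<psi>) (dim_vec \<psi>) (\<lambda>(i, j). \<psi> $ i * cnj (\<psi> $ j))"

definition pauliX :: "complex mat" where
  "pauliX = mat_of_rows_list 2 [[0, 1], [1, 0]]"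

definition pauliZ :: "complex mat" where
  "pauliZ = mat_of_rows_list 2 [[1, 0], [0, -1]]"

definition pauli1 :: "bool \<Rightarrow> bool \<Rightarrow> complex mat" where
  "pauli1 v w = (if v then pauliX else 1\<^sub>m 2) * (if w then pauliZ else 1\<^sub>m 2)"

text \<open>A label x = (v1,w1,...,vn,wn) is a bool list of length 2n.\<close>
fun pauli_tensor :: "bool list \<Rightarrow> complex mat" where
  "pauli_tensor (v # w # xs) = kron (pauli1 v w) (pauli_tensor xs)"
| "pauli_tensor _ = 1\<^sub>m 1"

fun vdotw :: "bool list \<Rightarrow> nat" where
  "vdotw (v # w # xs) = (if v \<and> w then 1 else 0) + vdotw xs"
| "vdotw _ = 0"

definition pauli :: "bool list \<Rightarrow> complex mat" where
  "pauli x = (\<i> ^ vdotw x) \<cdot>\<^sub>m pauli_tensor x"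

definition pauli_dist :: "nat \<Rightarrow> complex vec \<Rightarrow> bool list \<Rightarrow> real" where
  "pauli_dist n \<psi> x = Re ((mtrace (density \<psi> * pauli x)) ^ 2) / 2 ^ n"

definition pauli_marginal :: "nat \<Rightarrow> complex vec \<Rightarrow> bool list \<Rightarrow> real" where
  "pauli_marginal n \<psi> pre =
     (\<Sum>x \<in> {x. length x = 2 * n \<and> take (length pre) x = pre}. pauli_dist n \<psi> x)"

definition good_estimates :: "nat \<Rightarrow> real \<Rightarrow> complex vec \<Rightarrow> (bool list \<Rightarrow> real) \<Rightarrow> bool" where
  "good_estimates n \<epsilon> \<psi> \<pi> \<longleftrightarrow>
     (\<forall>k \<in> {1..n}.
        (\<forall>pre. length pre = 2 * k \<longrightarrow> \<bar>\<pi> pre - pauli_marginal n \<psi> pre\<bar> \<le> \<epsilon> / 2 ^ k) \<and>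
        (\<forall>pre. length pre = 2 * k - 1 \<longrightarrow> \<bar>\<pi> pre - pauli_marginal n \<psi> pre\<bar> \<le> 2 * \<epsilon> / 2 ^ k))"

definition outcome_prob :: "complex mat list \<Rightarrow> complex vec \<Rightarrow> nat \<Rightarrow> real" where
  "outcome_prob Ms \<psi> i = Re (mtrace (Ms ! i * kron (density \<psi>) (density \<psi>)))"

text \<open>The POVM Ms is applied independently to each of N pairs rho (x) rho; the
  classical post-processing est maps the list of N outcomes to estimates.\<close>
definition success_prob ::
  "nat \<Rightarrow> real \<Rightarrow> nat \<Rightarrow> complex mat list \<Rightarrow> (nat list \<Rightarrow> bool list \<Rightarrow> real) \<Rightarrow> complex vec \<Rightarrow> real" where
  "success_prob n \<epsilon> N Ms est \<psi> =
     (\<Sum>os \<in> {os. length os = N \<and> set os \<subseteq> {..<length Ms} \<and> good_estimates n \<epsilon> \<psi> (est os)}.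
        prod_list (map (outcome_prob Ms \<psi>) os))"

end

theory Submission
  imports Defs
begin

definition t1 :: "bool \<Rightarrow> bool \<Rightarrow> nat \<Rightarrow> nat \<Rightarrow> complex" where
  "t1 v w i j = (if j = (if v then 1 - i else i) then (if w then (if j = 0 then 1 else -1) else 1) else 0)"

definition e1 :: "bool \<Rightarrow> bool \<Rightarrow> nat \<Rightarrow> nat \<Rightarrow> complex" where
  "e1 v w i j = \<i> ^ (if v \<and> w then 1 else 0) * t1 v w i j"

definition s1 :: "bool \<Rightarrow> bool \<Rightarrow> bool \<Rightarrow> bool \<Rightarrow> real" where
  "s1 xv xw yv yw = (if odd (of_bool (xv \<and> yw) + of_bool (xw \<and> yv) + of_bool (yv \<and> yw) :: nat) then -1 else 1)"

lemma less2: "(i::nat) < 2 \<Longrightarrow> i = 0 \<or> i = 1" by auto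

lemma p1_eq: "pauli1 v w = mat 2 2 (\<lambda>(i,j). t1 v w i j)"
proof (rule eq_matI)
  show "dim_row (pauli1 v w) = dim_row (mat 2 2 (\<lambda>(i,j). t1 v w i j))"
    by (cases v; cases w) (simp_all add: pauli1_def pauliX_def pauliZ_def mat_of_rows_list_def)
  show "dim_col (pauli1 v w) = dim_col (mat 2 2 (\<lambda>(i,j). t1 v w i j))"
    by (cases v; cases w) (simp_all add: pauli1_def pauliX_def pauliZ_def mat_of_rows_list_def)
  fix i j assume "i < dim_row (mat 2 2 (\<lambda>(i,j). t1 v w i j))" "j < dim_col (mat 2 2 (\<lambda>(i,j). t1 v w i j))"
  then have "i < 2" "j < 2" by auto
  then show "pauli1 v w $$ (i, j) = mat 2 2 (\<lambda>(i,j). t1 v w i j) $$ (i, j)"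
    apply (cases v; cases w; insert less2[of i] less2[of j])
    by (auto simp: pauli1_def pauliX_def pauliZ_def mat_of_rows_list_def t1_def scalar_prod_def row_def col_def)
qed

lemma base_id:
  assumes "a < 2" "b < 2" "a' < 2" "b' < 2"
  shows "(\<Sum>v\<in>UNIV. \<Sum>w\<in>UNIV. complex_of_real (s1 v w yv yw) * e1 v w a b * cnj (e1 v w a' b'))
         = 2 * e1 yv yw a a' * e1 yv yw b b'"
  using less2[OF assms(1)] less2[OF assms(2)] less2[OF assms(3)] less2[OF assms(4)]
  by (cases yv; cases yw; auto simp: UNIV_bool s1_def e1_def t1_def mult.assoc)

lemma base_sum: "\<bar>\<Sum>v\<in>UNIV. \<Sum>w\<in>UNIV. s1 xv xw v w\<bar> = 2"
  by (cases xv; cases xw; simp add: UNIV_bool s1_def)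

definition L :: "nat \<Rightarrow> bool list set" where "L m = {x. length x = 2*m}"

lemma finite_L[simp]: "finite (L m)"
proof -
  have "L m = {xs. set xs \<subseteq> UNIV \<and> length xs = 2*m}" by (auto simp: L_def)
  then show ?thesis using finite_lists_length_eq[of "UNIV::bool set" "2*m"] by simp
qed

lemma L_Suc_ex: "length x = 2 * Suc m \<Longrightarrow> \<exists>v w y. x = v#w#y \<and> length y = 2*m"
  by (cases x; cases "tl x") auto

lemma sum_L_Suc: "(\<Sum>x\<in>L (Suc m). F x) = (\<Sum>v\<in>UNIV. \<Sum>w\<in>UNIV. \<Sum>x\<in>L m. F (v#w#x))"
proof -
  have eq: "L (Suc m) = (\<lambda>(v,w,x). v#w#x) ` (UNIV \<times> UNIV \<times> L m)"
    using L_Suc_ex by (fastforce simp: L_def image_iff)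
  have inj: "inj_on (\<lambda>(v,w,x). v#w#x) (UNIV \<times> UNIV \<times> L m)" by (auto simp: inj_on_def)
  have "(\<Sum>x\<in>L (Suc m). F x) = sum (F \<circ> (\<lambda>(v,w,x). v#w#x)) (UNIV \<times> UNIV \<times> L m)"
    unfolding eq by (rule sum.reindex[OF inj])
  also have "\<dots> = (\<Sum>(v,p)\<in>UNIV \<times> (UNIV \<times> L m). F (v # fst p # snd p))"
    by (intro sum.cong refl) auto
  also have "\<dots> = (\<Sum>v\<in>UNIV. \<Sum>p\<in>UNIV \<times> L m. F (v # fst p # snd p))"
    by (rule sum.Sigma[symmetric]) auto
  also have "\<dots> = (\<Sum>v\<in>UNIV. \<Sum>(w,x)\<in>UNIV \<times> L m. F (v # w # x))"
    by (intro sum.cong refl) auto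
  also have "\<dots> = (\<Sum>v\<in>UNIV. \<Sum>w\<in>UNIV. \<Sum>x\<in>L m. F (v#w#x))"
    by (intro sum.cong refl sum.Sigma[symmetric]) auto
  finally show ?thesis .
qed

lemma L_0: "L 0 = {[]}" by (auto simp: L_def)

fun pt :: "bool list \<Rightarrow> nat \<Rightarrow> nat \<Rightarrow> complex" where
  "pt (v#w#xs) i j = t1 v w (i div 2^(length xs div 2)) (j div 2^(length xs div 2)) *
       pt xs (i mod 2^(length xs div 2)) (j mod 2^(length xs div 2))"
| "pt _ i j = (if i = j then 1 else 0)"

lemma div_lt2: "(i::nat) < 2 * 2^m \<Longrightarrow> i div 2^m < 2"
  by (simp add: less_mult_imp_div_less mult.commute)

lemma pt_eq: "length x = 2*m \<Longrightarrow> pauli_tensor x = mat (2^m) (2^m) (\<lambda>(i,j). pt x i j)"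
proof (induction m arbitrary: x)
  case 0
  then have "x = []" by simp
  then show ?case by (auto intro!: eq_matI)
next
  case (Suc m)
  then obtain v w y where x: "x = v#w#y" and ly: "length y = 2*m"
    by (cases x; cases "tl x") auto
  have IH: "pauli_tensor y = mat (2^m) (2^m) (\<lambda>(i,j). pt y i j)" using Suc.IH ly by simp
  have ldiv: "length y div 2 = m" using ly by simp
  show ?case
  proof (rule eq_matI)
    fix i j assume "i < dim_row (mat (2 ^ Suc m) (2 ^ Suc m) (\<lambda>(i,j). pt x i j))"
      "j < dim_col (mat (2 ^ Suc m) (2 ^ Suc m) (\<lambda>(i,j). pt x i j))"
    then have ij: "i < 2 * 2^m" "j < 2 * 2^m" by auto
    show "pauli_tensor x $$ (i, j) = mat (2 ^ Suc m) (2 ^ Suc m) (\<lambda>(i,j). pt x i j) $$ (i, j)"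
      using ij div_lt2[OF ij(1)] div_lt2[OF ij(2)]
      by (simp add: x kron_def IH p1_eq ldiv)
  qed (simp_all add: x kron_def IH p1_eq)
qed

definition pe :: "bool list \<Rightarrow> nat \<Rightarrow> nat \<Rightarrow> complex" where
  "pe x i j = \<i> ^ (vdotw x) * pt x i j"

lemma pauli_eq: "length x = 2*m \<Longrightarrow> pauli x = mat (2^m) (2^m) (\<lambda>(i,j). pe x i j)"
  by (auto simp: pauli_def pt_eq pe_def intro!: eq_matI)

lemma pe_Cons: "pe (v#w#xs) i j = e1 v w (i div 2^(length xs div 2)) (j div 2^(length xs div 2)) *
       pe xs (i mod 2^(length xs div 2)) (j mod 2^(length xs div 2))"
  by (simp add: pe_def e1_def power_add)

fun s :: "bool list \<Rightarrow> bool list \<Rightarrow> real" where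
  "s (xv#xw#xs) (yv#yw#ys) = s1 xv xw yv yw * s xs ys"
| "s _ _ = 1"

lemma I2: "length y = 2*m \<Longrightarrow> i < 2^m \<Longrightarrow> j < 2^m \<Longrightarrow> i' < 2^m \<Longrightarrow> j' < 2^m \<Longrightarrow>
  (\<Sum>x\<in>L m. complex_of_real (s x y) * pe x i j * cnj (pe x i' j')) = 2^m * pe y i i' * pe y j j'"
proof (induction m arbitrary: y i j i' j')
  case 0
  then show ?case by (simp add: L_0 pe_def)
next
  case (Suc m)
  then obtain yv yw y' where y: "y = yv#yw#y'" and ly: "length y' = 2*m"
    by (cases y; cases "tl y") auto
  define M :: nat where "M = 2^m"
  have b: "i < 2*M" "j < 2*M" "i' < 2*M" "j' < 2*M" using Suc.prems by (auto simp: M_def)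
  have d: "i div M < 2" "j div M < 2" "i' div M < 2" "j' div M < 2"
    using div_lt2 b unfolding M_def by auto
  have md: "i mod M < 2^m" "j mod M < 2^m" "i' mod M < 2^m" "j' mod M < 2^m"
    unfolding M_def by auto
  have "(\<Sum>x\<in>L (Suc m). complex_of_real (s x y) * pe x i j * cnj (pe x i' j'))
     = (\<Sum>v\<in>UNIV. \<Sum>w\<in>UNIV. \<Sum>x\<in>L m.
         (complex_of_real (s1 v w yv yw) * e1 v w (i div M) (j div M) * cnj (e1 v w (i' div M) (j' div M))) *
         (complex_of_real (s x y') * pe x (i mod M) (j mod M) * cnj (pe x (i' mod M) (j' mod M))))"
    unfolding sum_L_Suc
    by (intro sum.cong refl) (auto simp: y pe_Cons L_def M_def)
  also have "\<dots> = (\<Sum>v\<in>UNIV. \<Sum>w\<in>UNIV.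
         (complex_of_real (s1 v w yv yw) * e1 v w (i div M) (j div M) * cnj (e1 v w (i' div M) (j' div M)))) *
       (\<Sum>x\<in>L m. complex_of_real (s x y') * pe x (i mod M) (j mod M) * cnj (pe x (i' mod M) (j' mod M)))"
  proof -
    have "\<And>v w. (\<Sum>x\<in>L m.
         (complex_of_real (s1 v w yv yw) * e1 v w (i div M) (j div M) * cnj (e1 v w (i' div M) (j' div M))) *
         (complex_of_real (s x y') * pe x (i mod M) (j mod M) * cnj (pe x (i' mod M) (j' mod M))))
       = (complex_of_real (s1 v w yv yw) * e1 v w (i div M) (j div M) * cnj (e1 v w (i' div M) (j' div M))) *
         (\<Sum>x\<in>L m. complex_of_real (s x y') * pe x (i mod M) (j mod M) * cnj (pe x (i' mod M) (j' mod M)))"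
      by (rule sum_distrib_left[symmetric])
    then show ?thesis by (simp only: sum_distrib_right)
  qed
  also have "\<dots> = (2 * e1 yv yw (i div M) (i' div M) * e1 yv yw (j div M) (j' div M)) *
       (2^m * pe y' (i mod M) (i' mod M) * pe y' (j mod M) (j' mod M))"
    using base_id[OF d] Suc.IH[OF ly md] by simp
  also have "\<dots> = 2 ^ Suc m * pe y i i' * pe y j j'"
    by (simp add: y pe_Cons ly M_def)
  finally show ?case .
qed

lemma sum_split: fixes d :: nat shows "(\<Sum>c<d*d. F c) = (\<Sum>a<d. \<Sum>b<d. F (a*d+b))"
proof -
  have bij: "bij_betw (\<lambda>(a,b). a*d+b) ({..<d}\<times>{..<d}) {..<d*d}"
  proof (rule bij_betwI[where g = "\<lambda>c. (c div d, c mod d)"])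
    show "(\<lambda>(a,b). a*d+b) \<in> {..<d}\<times>{..<d} \<rightarrow> {..<d*d}"
    proof
      fix p assume "p \<in> {..<d}\<times>{..<d}"
      then obtain a b where p: "p = (a,b)" "a < d" "b < d" by auto
      have "a*d+b < a*d + d" using p by simp
      also have "\<dots> = (a+1)*d" by simp
      also have "\<dots> \<le> d*d" using p by (intro mult_right_mono) auto
      finally show "(\<lambda>(a,b). a*d+b) p \<in> {..<d*d}" using p by simp
    qed
    show "(\<lambda>c. (c div d, c mod d)) \<in> {..<d*d} \<rightarrow> {..<d}\<times>{..<d}"
      by (auto simp: less_mult_imp_div_less) (metis mult_zero_left not_less_zero mod_less_divisor neq0_conv)
    show "\<And>p. p \<in> {..<d}\<times>{..<d} \<Longrightarrow> (case (\<lambda>(a,b). a*d+b) p of c \<Rightarrow> (c div d, c mod d)) = p"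
      by auto
    show "\<And>c. c \<in> {..<d*d} \<Longrightarrow> (\<lambda>(a,b). a*d+b) (c div d, c mod d) = c"
      by auto
  qed
  have "(\<Sum>c<d*d. F c) = (\<Sum>p\<in>{..<d}\<times>{..<d}. F ((\<lambda>(a,b). a*d+b) p))"
    using sum.reindex_bij_betw[OF bij, of F] by simp
  also have "\<dots> = (\<Sum>a<d. \<Sum>b<d. F (a*d+b))"
    by (simp add: sum.cartesian_product case_prod_beta)
  finally show ?thesis .
qed

definition Mx :: "nat \<Rightarrow> bool list \<Rightarrow> complex mat" where
  "Mx n x = mat (4^n) (4^n) (\<lambda>(r,c). pe x (r div 2^n) (r mod 2^n) * cnj (pe x (c div 2^n) (c mod 2^n)) / 2^n)"

lemma four_pow: "(4::nat)^n = 2^n * 2^n"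
  by (simp add: power_mult_distrib[symmetric])

lemma Mx_psd: "psd_mat (4^n) (Mx n x)"
  unfolding psd_mat_def
proof (intro conjI ballI)
  show "Mx n x \<in> carrier_mat (4 ^ n) (4 ^ n)" by (simp add: Mx_def)
next
  fix v :: "complex vec" assume v: "v \<in> carrier_vec (4^n)"
  define g where "g r = pe x (r div 2^n) (r mod 2^n)" for r
  define z where "z = (\<Sum>c<4^n. cnj (g c) * v $ c)"
  have Mv: "(Mx n x *\<^sub>v v) $ r = g r * z / 2^n" if "r < 4^n" for r
    using that v unfolding z_def
    by (simp add: Mx_def scalar_prod_def row_def sum_distrib_left sum_divide_distrib g_def algebra_simps atLeast0LessThan)
  have "(Mx n x *\<^sub>v v) \<bullet> conjugate v = (\<Sum>r<4^n. g r * z / 2^n * cnj (v $ r))"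
    using v Mv by (simp add: scalar_prod_def atLeast0LessThan)
  also have "\<dots> = z / 2^n * cnj z"
    unfolding z_def by (simp add: sum_distrib_left sum_divide_distrib algebra_simps, rule sum.swap)
  also have "\<dots> = (z * cnj z) / 2^n" by simp
  also have "\<dots> = of_real ((cmod z)^2 / 2^n)"
    by (simp only: complex_norm_square[symmetric]) simp
  finally have eq: "(Mx n x *\<^sub>v v) \<bullet> conjugate v = of_real ((cmod z)^2 / 2^n)" .
  have "Im ((Mx n x *\<^sub>v v) \<bullet> conjugate v) = 0 \<and> 0 \<le> Re ((Mx n x *\<^sub>v v) \<bullet> conjugate v)"
    unfolding eq by simp
  then show "Im ((Mx n x *\<^sub>v v) \<bullet> conjugate v) = 0" "0 \<le> Re ((Mx n x *\<^sub>v v) \<bullet> conjugate v)" by auto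
qed

lemma foldr_mat: "(\<forall>A\<in>set As. A \<in> carrier_mat D D) \<Longrightarrow>
   foldr (+) As (0\<^sub>m D D) = mat D D (\<lambda>(i,j). \<Sum>A\<leftarrow>As. A $$ (i,j))"
  by (induction As) (auto intro!: eq_matI)

definition enum :: "nat \<Rightarrow> bool list list" where "enum n = List.n_lists (2*n) [False, True]"

lemma set_enum: "set (enum n) = L n" by (auto simp: enum_def set_n_lists L_def)
lemma distinct_enum: "distinct (enum n)" by (simp add: enum_def distinct_n_lists)
lemma length_enum: "length (enum n) = 4^n"
proof -
  have "length (enum n) = 2^(2*n)" by (simp add: enum_def length_n_lists numeral_2_eq_2)
  also have "(2::nat)^(2*n) = 4^n" by (simp add: power_mult)
  finally show ?thesis .
qed

definition Ms :: "nat \<Rightarrow> complex mat list" where "Ms n = map (Mx n) (enum n)"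

lemma s_zero: "\<forall>b\<in>set y. \<not> b \<Longrightarrow> s x y = 1"
  by (induction x y rule: s.induct) (auto simp: s1_def)

lemma divmod_eq: "((i::nat) div M = j div M \<and> i mod M = j mod M) \<longleftrightarrow> i = j"
  by (metis div_mult_mod_eq)

lemma pe_zero: "i < 2^m \<Longrightarrow> j < 2^m \<Longrightarrow> pe (replicate (2*m) False) i j = (if i = j then 1 else 0)"
proof (induction m arbitrary: i j)
  case 0 then show ?case by (simp add: pe_def)
next
  case (Suc m)
  have r: "replicate (2 * Suc m) False = False # False # replicate (2*m) False" by simp
  show ?case unfolding r pe_Cons
    using Suc.IH[of "i mod 2^m" "j mod 2^m"] divmod_eq[of i "2^m" j]
    by (auto simp: e1_def t1_def)
qed

lemma I2_zero: "i < 2^m \<Longrightarrow> j < 2^m \<Longrightarrow> i' < 2^m \<Longrightarrow> j' < 2^m \<Longrightarrow>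
  (\<Sum>x\<in>L m. pe x i j * cnj (pe x i' j')) = (if i = i' \<and> j = j' then 2^m else 0)"
  using I2[of "replicate (2*m) False" m i j i' j'] by (simp add: s_zero pe_zero)

lemma div_lt: "(r::nat) < 4^n \<Longrightarrow> r div 2^n < 2^n"
  by (simp add: four_pow less_mult_imp_div_less)

lemma povm: "is_povm (4^n) (Ms n)"
  unfolding is_povm_def
proof (intro conjI ballI)
  show "\<And>M. M \<in> set (Ms n) \<Longrightarrow> psd_mat (4 ^ n) M" by (auto simp: Ms_def Mx_psd)
  have car: "\<forall>A\<in>set (Ms n). A \<in> carrier_mat (4^n) (4^n)" by (auto simp: Ms_def Mx_def)
  show "foldr (+) (Ms n) (0\<^sub>m (4 ^ n) (4 ^ n)) = 1\<^sub>m (4 ^ n)"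
    unfolding foldr_mat[OF car]
  proof (rule eq_matI)
    fix r c assume "r < dim_row (1\<^sub>m (4 ^ n) :: complex mat)" "c < dim_col (1\<^sub>m (4 ^ n) :: complex mat)"
    then have rc: "r < 4^n" "c < 4^n" by auto
    have "(\<Sum>A\<leftarrow>Ms n. A $$ (r, c)) = (\<Sum>x\<leftarrow>enum n. Mx n x $$ (r, c))"
      by (simp add: Ms_def comp_def)
    also have "\<dots> = (\<Sum>x\<in>L n. Mx n x $$ (r, c))"
      by (simp add: sum_list_distinct_conv_sum_set[OF distinct_enum] set_enum)
    also have "\<dots> = (\<Sum>x\<in>L n. pe x (r div 2^n) (r mod 2^n) * cnj (pe x (c div 2^n) (c mod 2^n))) / 2^n"
      using rc by (simp add: Mx_def sum_divide_distrib)
    also have "\<dots> = (if r = c then 1 else 0)"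
      using rc by (simp add: I2_zero div_lt divmod_eq)
    finally show "mat (4 ^ n) (4 ^ n) (\<lambda>(i, j). \<Sum>A\<leftarrow>Ms n. A $$ (i, j)) $$ (r, c) = 1\<^sub>m (4 ^ n) $$ (r, c)"
      using rc by simp
  qed auto
qed

definition Bx :: "nat \<Rightarrow> complex vec \<Rightarrow> bool list \<Rightarrow> complex" where
  "Bx n \<psi> x = (\<Sum>a<2^n. \<Sum>b<2^n. cnj (pe x a b) * (\<psi> $ a * \<psi> $ b))"

definition prob :: "nat \<Rightarrow> complex vec \<Rightarrow> bool list \<Rightarrow> real" where
  "prob n \<psi> x = (cmod (Bx n \<psi> x))^2 / 2^n"

lemma prob_nonneg: "prob n \<psi> x \<ge> 0" by (simp add: prob_def)

lemma outcome: assumes psi: "\<psi> \<in> carrier_vec (2^n)" and o: "t < 4^n"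
  shows "outcome_prob (Ms n) \<psi> t = prob n \<psi> (enum n ! t)"
proof -
  define x where "x = enum n ! t"
  define d :: nat where "d = 2^n"
  define G where "G c = cnj (pe x (c div d) (c mod d)) * (\<psi> $ (c div d) * \<psi> $ (c mod d))" for c
  have dv: "dim_vec \<psi> = d" using psi by (simp add: d_def)
  have D: "(4::nat)^n = d*d" by (simp add: d_def four_pow)
  have Ms_o: "Ms n ! t = Mx n x" using o by (simp add: Ms_def x_def length_enum)
  have K: "kron (density \<psi>) (density \<psi>) $$ (c, r) =
      (\<psi> $ (c div d) * cnj (\<psi> $ (r div d))) * (\<psi> $ (c mod d) * cnj (\<psi> $ (r mod d)))"
    if "c < d*d" "r < d*d" for c r
    using that dv by (simp add: kron_def density_def less_mult_imp_div_less d_def)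
  have "mtrace (Mx n x * kron (density \<psi>) (density \<psi>)) =
      (\<Sum>r<d*d. \<Sum>c<d*d. Mx n x $$ (r, c) * kron (density \<psi>) (density \<psi>) $$ (c, r))"
    unfolding mtrace_def using dv D
    by (simp add: Mx_def scalar_prod_def row_def col_def kron_def density_def atLeast0LessThan)
  also have "\<dots> = (\<Sum>r<d*d. \<Sum>c<d*d. cnj (G r) * G c / 2^n)"
    by (intro sum.cong refl) (simp add: K Mx_def D G_def d_def[symmetric] algebra_simps)
  also have "\<dots> = cnj (\<Sum>r<d*d. G r) * (\<Sum>c<d*d. G c) / 2^n"
    by (simp add: sum_distrib_left sum_distrib_right sum_divide_distrib, rule sum.swap)
  also have "(\<Sum>c<d*d. G c) = Bx n \<psi> x"
    unfolding sum_split Bx_def G_def d_def by simp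
  finally have "mtrace (Mx n x * kron (density \<psi>) (density \<psi>)) = cnj (Bx n \<psi> x) * Bx n \<psi> x / 2^n" .
  also have "\<dots> = of_real ((cmod (Bx n \<psi> x))^2 / 2^n)"
    by (simp only: mult.commute[of "cnj _"] complex_norm_square[symmetric]) simp
  finally show ?thesis by (simp add: outcome_prob_def Ms_o prob_def x_def)
qed

lemma sq_norm_c: "(complex_of_real (cmod z))^2 = z * cnj z"
  by (metis complex_norm_square of_real_power)

lemma mtrace_T: assumes psi: "\<psi> \<in> carrier_vec (2^n)" and ly: "length y = 2*n"
  shows "mtrace (density \<psi> * pauli y) = (\<Sum>a<2^n. \<Sum>a'<2^n. \<psi> $ a * cnj (\<psi> $ a') * pe y a' a)"
  using psi unfolding mtrace_def pauli_eq[OF ly]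
  by (simp add: density_def scalar_prod_def row_def col_def atLeast0LessThan)

lemma pd: assumes psi: "\<psi> \<in> carrier_vec (2^n)" and ly: "length y = 2*n"
  shows "(\<Sum>x\<in>L n. s x y * prob n \<psi> x) = Re ((mtrace (density \<psi> * pauli y))^2)"
proof -
  define d :: nat where "d = 2^n"
  define P where "P a b a' b' = \<psi> $ a * \<psi> $ b * cnj (\<psi> $ a') * cnj (\<psi> $ b')" for a b a' b'
  have e1: "Bx n \<psi> x * cnj (Bx n \<psi> x) =
     (\<Sum>a<d. \<Sum>a'<d. \<Sum>b<d. \<Sum>b'<d. cnj (pe x a b) * pe x a' b' * P a b a' b')" for x
    unfolding Bx_def cnj_sum complex_cnj_mult complex_cnj_cnj sum_product d_def
    by (simp add: P_def algebra_simps)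
  have "complex_of_real (\<Sum>x\<in>L n. s x y * prob n \<psi> x) =
     (\<Sum>x\<in>L n. \<Sum>a<d. \<Sum>a'<d. \<Sum>b<d. \<Sum>b'<d.
        complex_of_real (s x y) * (cnj (pe x a b) * pe x a' b' * P a b a' b')) / 2^n"
  proof -
    have "complex_of_real (\<Sum>x\<in>L n. s x y * prob n \<psi> x) =
      (\<Sum>x\<in>L n. complex_of_real (s x y) * (Bx n \<psi> x * cnj (Bx n \<psi> x)) / 2^n)"
      by (simp add: prob_def sq_norm_c)
    then show ?thesis by (simp only: e1 sum_divide_distrib sum_distrib_left)
  qed
  also have "\<dots> = (\<Sum>a<d. \<Sum>a'<d. \<Sum>b<d. \<Sum>b'<d. \<Sum>x\<in>L n.
        complex_of_real (s x y) * (cnj (pe x a b) * pe x a' b' * P a b a' b')) / 2^n"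
    by (simp only: sum.swap[where A = "L n"])
  also have "\<dots> = (\<Sum>a<d. \<Sum>a'<d. \<Sum>b<d. \<Sum>b'<d.
        (\<Sum>x\<in>L n. complex_of_real (s x y) * pe x a' b' * cnj (pe x a b)) * P a b a' b') / 2^n"
    by (simp add: sum_distrib_left sum_distrib_right algebra_simps)
  also have "\<dots> = (\<Sum>a<d. \<Sum>a'<d. \<Sum>b<d. \<Sum>b'<d.
        (2^n * pe y a' a * pe y b' b) * P a b a' b') / 2^n"
    by (intro arg_cong[where f = "\<lambda>t. t / 2^n"] sum.cong refl) (simp add: I2[OF ly] d_def)
  also have "\<dots> = (\<Sum>a<d. \<Sum>a'<d. \<Sum>b<d. \<Sum>b'<d.
        (\<psi> $ a * cnj (\<psi> $ a') * pe y a' a) * (\<psi> $ b * cnj (\<psi> $ b') * pe y b' b))"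
    by (simp add: sum_divide_distrib P_def algebra_simps)
  also have "\<dots> = (\<Sum>a<d. \<Sum>b<d. \<Sum>a'<d. \<Sum>b'<d.
        (\<psi> $ a * cnj (\<psi> $ a') * pe y a' a) * (\<psi> $ b * cnj (\<psi> $ b') * pe y b' b))"
    by (rule sum.cong[OF refl], rule sum.swap)
  also have "\<dots> = (mtrace (density \<psi> * pauli y))^2"
    unfolding mtrace_T[OF psi ly] power2_eq_square sum_product d_def ..
  finally have "complex_of_real (\<Sum>x\<in>L n. s x y * prob n \<psi> x) = (mtrace (density \<psi> * pauli y))^2" .
  then show ?thesis by (metis Re_complex_of_real)
qed

lemma prob_sum: assumes "pure_state n \<psi>" shows "(\<Sum>x\<in>L n. prob n \<psi> x) = 1"
proof -
  have psi: "\<psi> \<in> carrier_vec (2^n)" and one: "\<psi> \<bullet> conjugate \<psi> = 1"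
    using assms by (auto simp: pure_state_def)
  have ly: "length (replicate (2*n) False) = 2*n" by simp
  have "(\<Sum>x\<in>L n. prob n \<psi> x) = (\<Sum>x\<in>L n. s x (replicate (2*n) False) * prob n \<psi> x)"
    by (simp add: s_zero)
  also have "\<dots> = Re ((mtrace (density \<psi> * pauli (replicate (2*n) False)))^2)"
    by (rule pd[OF psi ly])
  also have "mtrace (density \<psi> * pauli (replicate (2*n) False)) =
      (\<Sum>a<2^n. \<Sum>a'<2^n. \<psi> $ a * cnj (\<psi> $ a') * (if a' = a then 1 else 0))"
    unfolding mtrace_T[OF psi ly] by (intro sum.cong refl) (simp add: pe_zero)
  also have "\<dots> = (\<Sum>a<2^n. \<psi> $ a * cnj (\<psi> $ a))"
    by (simp add: if_distrib[of "\<lambda>t. _ * t"] cong: if_cong)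
  also have "\<dots> = 1" using one psi by (simp add: scalar_prod_def atLeast0LessThan)
  finally show ?thesis by simp
qed

definition fa :: "nat \<Rightarrow> bool list \<Rightarrow> bool list \<Rightarrow> real" where
  "fa n a x = (\<Sum>b\<in>L (n - length a div 2). s x (a@b)) / 2^(n - length a div 2)"

lemma take_set: assumes "length a = 2*k" "k \<le> n"
  shows "{x. length x = 2*n \<and> take (length a) x = a} = (\<lambda>b. a@b) ` L (n-k)"
proof (rule Set.set_eqI)
  fix x show "x \<in> {x. length x = 2*n \<and> take (length a) x = a} \<longleftrightarrow> x \<in> (\<lambda>b. a@b) ` L (n-k)"
  proof
    assume "x \<in> {x. length x = 2*n \<and> take (length a) x = a}"
    then have x: "length x = 2*n" "take (length a) x = a" by auto
    have "x = a @ drop (length a) x" using x(2) by (metis append_take_drop_id)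
    moreover have "drop (length a) x \<in> L (n-k)" using x(1) assms by (simp add: L_def)
    ultimately show "x \<in> (\<lambda>b. a@b) ` L (n-k)" by blast
  next
    assume "x \<in> (\<lambda>b. a@b) ` L (n-k)"
    then show "x \<in> {x. length x = 2*n \<and> take (length a) x = a}" using assms by (auto simp: L_def)
  qed
qed

lemma marg_even: assumes psi: "\<psi> \<in> carrier_vec (2^n)" and la: "length a = 2*k" and kn: "k \<le> n"
  shows "pauli_marginal n \<psi> a = (\<Sum>x\<in>L n. prob n \<psi> x * fa n a x) / 2^k"
proof -
  have ly: "length (a@b) = 2*n" if "b \<in> L (n-k)" for b using that la kn by (simp add: L_def)
  have "pauli_marginal n \<psi> a = (\<Sum>b\<in>L (n-k). pauli_dist n \<psi> (a@b))"
    unfolding pauli_marginal_def take_set[OF la kn]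
    by (rule sum.reindex[unfolded comp_def]) (simp add: inj_on_def)
  also have "\<dots> = (\<Sum>b\<in>L (n-k). (\<Sum>x\<in>L n. s x (a@b) * prob n \<psi> x) / 2^n)"
    by (intro sum.cong refl) (simp add: pauli_dist_def pd[OF psi ly])
  also have "\<dots> = (\<Sum>x\<in>L n. prob n \<psi> x * (\<Sum>b\<in>L (n-k). s x (a@b))) / 2^n"
    by (simp add: sum_divide_distrib[symmetric] sum_distrib_left algebra_simps, rule sum.swap)
  also have "\<dots> = (\<Sum>x\<in>L n. prob n \<psi> x * fa n a x) * 2^(n-k) / 2^n"
    by (simp add: fa_def la sum_distrib_right)
  also have "\<dots> = (\<Sum>x\<in>L n. prob n \<psi> x * fa n a x) / 2^k"
  proof -
    have "(2::real)^n = 2^k * 2^(n-k)" using kn by (simp add: power_add[symmetric])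
    then show ?thesis by simp
  qed
  finally show ?thesis .
qed

lemma s_append: "length x1 = length y1 \<Longrightarrow> even (length x1) \<Longrightarrow> s (x1@x2) (y1@y2) = s x1 y1 * s x2 y2"
  by (induction x1 y1 rule: s.induct) auto

lemma abs_s: "\<bar>s x y\<bar> = 1" by (induction x y rule: s.induct) (auto simp: s1_def abs_mult)

lemma sum_s: "z \<in> L m \<Longrightarrow> \<bar>\<Sum>b\<in>L m. s z b\<bar> = 2^m"
proof (induction m arbitrary: z)
  case 0 then show ?case by (simp add: L_0 L_def)
next
  case (Suc m)
  then obtain v w z' where z: "z = v#w#z'" and z': "z' \<in> L m"
    using L_Suc_ex[of z m] by (auto simp: L_def)
  have "(\<Sum>b\<in>L (Suc m). s z b) = (\<Sum>bv\<in>UNIV. \<Sum>bw\<in>UNIV. \<Sum>b\<in>L m. s1 v w bv bw * s z' b)"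
    unfolding sum_L_Suc z by simp
  also have "\<dots> = (\<Sum>bv\<in>UNIV. \<Sum>bw\<in>UNIV. s1 v w bv bw * (\<Sum>b\<in>L m. s z' b))"
    by (simp only: sum_distrib_left)
  also have "\<dots> = (\<Sum>bv\<in>UNIV. \<Sum>bw\<in>UNIV. s1 v w bv bw) * (\<Sum>b\<in>L m. s z' b)"
    by (simp only: sum_distrib_right)
  finally show ?case using base_sum[of v w] Suc.IH[OF z'] by (simp add: abs_mult)
qed

lemma fa_bound: assumes x: "x \<in> L n" and la: "length a = 2*k" and kn: "k \<le> n"
  shows "\<bar>fa n a x\<bar> \<le> 1"
proof -
  have lt: "length (take (length a) x) = length a" using x la kn by (simp add: L_def)
  have dr: "drop (length a) x \<in> L (n-k)" using x la kn by (simp add: L_def)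
  have sa: "s x (a@b) = s (take (length a) x) a * s (drop (length a) x) b" for b
  proof -
    have "s x (a@b) = s (take (length a) x @ drop (length a) x) (a@b)" by simp
    also have "\<dots> = s (take (length a) x) a * s (drop (length a) x) b"
      by (rule s_append) (use lt la in auto)
    finally show ?thesis .
  qed
  have "(\<Sum>b\<in>L (n-k). s x (a@b)) = (\<Sum>b\<in>L (n-k). s (take (length a) x) a * s (drop (length a) x) b)"
    using sa by simp
  also have "\<dots> = s (take (length a) x) a * (\<Sum>b\<in>L (n-k). s (drop (length a) x) b)"
    by (simp add: sum_distrib_left)
  finally have "\<bar>\<Sum>b\<in>L (n-k). s x (a@b)\<bar> = 2^(n-k)"
    using sum_s[OF dr] abs_s by (simp add: abs_mult)
  then show ?thesis by (simp add: fa_def la)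
qed

lemma marg_split: assumes "length pre < 2*n"
  shows "pauli_marginal n \<psi> pre = pauli_marginal n \<psi> (pre@[False]) + pauli_marginal n \<psi> (pre@[True])"
proof -
  let ?S = "\<lambda>p::bool list. {x. length x = 2*n \<and> take (length p) x = p}"
  have fin: "finite (?S p)" for p
    by (rule finite_subset[OF _ finite_L]) (auto simp: L_def)
  have eq: "?S pre = ?S (pre@[False]) \<union> ?S (pre@[True])"
  proof (rule Set.set_eqI)
    fix x show "x \<in> ?S pre \<longleftrightarrow> x \<in> ?S (pre@[False]) \<union> ?S (pre@[True])"
    proof
      assume "x \<in> ?S pre"
      then have x: "length x = 2*n" "take (length pre) x = pre" by auto
      then have "take (Suc (length pre)) x = pre @ [x ! length pre]"
        using assms by (simp add: take_Suc_conv_app_nth)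
      then show "x \<in> ?S (pre@[False]) \<union> ?S (pre@[True])" using x by (cases "x ! length pre") auto
    next
      assume "x \<in> ?S (pre@[False]) \<union> ?S (pre@[True])"
      then obtain c where lx: "length x = 2*n" and tc: "take (Suc (length pre)) x = pre @ [c]" by auto
      have "take (length pre) x = pre"
      proof -
        have "take (length pre) x = take (length pre) (take (Suc (length pre)) x)" by simp
        also have "\<dots> = pre" using tc by simp
        finally show ?thesis .
      qed
      then show "x \<in> ?S pre" using lx by auto
    qed
  qed
  have disj: "?S (pre@[False]) \<inter> ?S (pre@[True]) = {}" by auto
  show ?thesis unfolding pauli_marginal_def eq
    by (rule sum.union_disjoint[OF fin fin disj])
qed

definition Lists :: "nat \<Rightarrow> nat \<Rightarrow> nat list set" where
  "Lists N m = {os. length os = N \<and> set os \<subseteq> {..<m}}"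

lemma finite_Lists[simp]: "finite (Lists N m)"
  unfolding Lists_def using finite_lists_length_eq[of "{..<m}" N] by (simp add: conj_commute)

lemma sum_Lists_Suc: "(\<Sum>os\<in>Lists (Suc N) m. F os) = (\<Sum>t<m. \<Sum>os\<in>Lists N m. F (t#os))"
proof -
  have eq: "Lists (Suc N) m = (\<lambda>(t,os). t#os) ` ({..<m} \<times> Lists N m)"
  proof (rule Set.set_eqI)
    fix xs show "xs \<in> Lists (Suc N) m \<longleftrightarrow> xs \<in> (\<lambda>(t,os). t#os) ` ({..<m} \<times> Lists N m)"
      by (cases xs) (auto simp: Lists_def image_iff)
  qed
  have inj: "inj_on (\<lambda>(t,os). t#os) ({..<m} \<times> Lists N m)" by (auto simp: inj_on_def)
  have "(\<Sum>os\<in>Lists (Suc N) m. F os) = sum (F \<circ> (\<lambda>(t,os). t#os)) ({..<m} \<times> Lists N m)"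
    unfolding eq by (rule sum.reindex[OF inj])
  also have "\<dots> = (\<Sum>(t,os)\<in>{..<m} \<times> Lists N m. F (t#os))"
    by (intro sum.cong refl) auto
  also have "\<dots> = (\<Sum>t<m. \<Sum>os\<in>Lists N m. F (t#os))"
    by (rule sum.cartesian_product[symmetric])
  finally show ?thesis .
qed

lemma Lists_0: "Lists 0 m = {[]}" by (auto simp: Lists_def)

lemma sum_prod_list: "(\<Sum>os\<in>Lists N m. prod_list (map F os)) = (\<Sum>t<m. F t)^N"
  for F :: "nat \<Rightarrow> real"
proof (induction N)
  case 0 then show ?case by (simp add: Lists_0)
next
  case (Suc N)
  have "(\<Sum>os\<in>Lists (Suc N) m. prod_list (map F os)) = (\<Sum>t<m. F t * (\<Sum>os\<in>Lists N m. prod_list (map F os)))"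
    unfolding sum_Lists_Suc by (simp add: sum_distrib_left)
  also have "\<dots> = (\<Sum>t<m. F t)^Suc N" by (simp add: Suc.IH sum_distrib_right[symmetric])
  finally show ?case .
qed

lemma exp_quad: assumes "\<bar>y\<bar> \<le> (1::real)" shows "exp y \<le> 1 + y + y^2"
proof (cases "y \<ge> 0")
  case True then show ?thesis using exp_bound[of y] assms by simp
next
  case False
  define u where "u = -y"
  have u: "0 \<le> u" "u \<le> 1" using False assms by (auto simp: u_def)
  define A where "A = 1 - u + u^2"
  have B: "1 + u + u^2/2 \<le> exp u" by (rule exp_lower_Taylor_quadratic) (use u in simp)
  have "A * (1 + u + u^2/2) = 1 + (u^2 + u^3 + u^4) / 2"
    unfolding A_def by (simp add: field_simps power2_eq_square power3_eq_cube power4_eq_xxxx)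
  moreover have "0 \<le> (u^2 + u^3 + u^4) / 2" using u by simp
  ultimately have 1: "1 \<le> A * (1 + u + u^2/2)" by linarith
  have "A = (u - 1/2)^2 + 3/4" unfolding A_def by (simp add: power2_eq_square field_simps)
  then have Apos: "0 < A" by (metis add_pos_nonneg zero_less_divide_iff zero_le_power2 zero_less_numeral add.commute)
  have "A * (1 + u + u^2/2) \<le> A * exp u" using B Apos by (intro mult_left_mono) auto
  with 1 have "1 \<le> A * exp u" by linarith
  then have "exp (-u) \<le> A"
    by (simp add: exp_minus inverse_eq_divide divide_le_eq mult.commute)
  then show ?thesis by (simp add: u_def A_def)
qed

lemma prod_list_nonneg': "(\<forall>x\<in>set xs. (0::real) \<le> x) \<Longrightarrow> 0 \<le> prod_list xs"
  by (induction xs) auto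

lemma exp_sum_list: "exp (\<Sum>t\<leftarrow>os. h t) = prod_list (map (\<lambda>t. exp (h t)) os)"
  for h :: "nat \<Rightarrow> real"
proof (induction os)
  case (Cons a os)
  have "exp (\<Sum>t\<leftarrow>a#os. h t) = exp (h a) * exp (\<Sum>t\<leftarrow>os. h t)" by (simp add: exp_add)
  then show ?case using Cons.IH by simp
qed simp

lemma prod_list_map_mult': "prod_list (map (\<lambda>i. f i * h i) os) = prod_list (map f os) * prod_list (map h os)"
  for f h :: "nat \<Rightarrow> real"
  by (induction os) (auto simp: algebra_simps)

locale conc =
  fixes m :: nat and q g :: "nat \<Rightarrow> real"
  assumes q_nn: "\<And>t. t < m \<Longrightarrow> q t \<ge> 0"
    and q_sum: "(\<Sum>t<m. q t) = 1"
    and g_bd: "\<And>t. t < m \<Longrightarrow> \<bar>g t\<bar> \<le> 1"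
begin

definition "\<mu> = (\<Sum>t<m. q t * g t)"

lemma mu_bd: "\<bar>\<mu>\<bar> \<le> 1"
proof -
  have "\<bar>\<mu>\<bar> \<le> (\<Sum>t<m. \<bar>q t * g t\<bar>)" unfolding \<mu>_def by (rule sum_abs)
  also have "\<dots> \<le> (\<Sum>t<m. q t)"
    by (intro sum_mono) (use q_nn g_bd in \<open>auto simp: abs_mult intro: mult_left_le\<close>)
  finally show ?thesis using q_sum by simp
qed

lemma mgf: assumes t: "0 \<le> t" "t \<le> 1/2"
  shows "(\<Sum>i<m. q i * exp (t * (g i - \<mu>))) \<le> exp (4 * t^2)"
proof -
  have "(\<Sum>i<m. q i * exp (t * (g i - \<mu>))) \<le> (\<Sum>i<m. q i * (1 + t * (g i - \<mu>) + (t * (g i - \<mu>))^2))"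
  proof (intro sum_mono mult_left_mono)
    fix i assume "i \<in> {..<m}"
    then have i: "i < m" by simp
    have "\<bar>g i - \<mu>\<bar> \<le> 2" using g_bd[OF i] mu_bd by linarith
    moreover have "t * \<bar>g i - \<mu>\<bar> \<le> t * 2" using calculation t by (intro mult_left_mono) auto
    ultimately have "\<bar>t * (g i - \<mu>)\<bar> \<le> 1" using t by (simp add: abs_mult)
    then show "exp (t * (g i - \<mu>)) \<le> 1 + t * (g i - \<mu>) + (t * (g i - \<mu>))^2"
      by (intro exp_quad)
    show "0 \<le> q i" using q_nn[OF i] .
  qed
  also have "\<dots> = (\<Sum>i<m. q i + t * (q i * g i) - (t * \<mu>) * q i + t^2 * (q i * (g i - \<mu>)^2))"
    by (intro sum.cong refl) (simp add: algebra_simps power2_eq_square)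
  also have "\<dots> = (\<Sum>i<m. q i) + t * (\<Sum>i<m. q i * g i) - (t * \<mu>) * (\<Sum>i<m. q i) + t^2 * (\<Sum>i<m. q i * (g i - \<mu>)^2)"
    by (simp only: sum.distrib sum_subtractf sum_distrib_left)
  also have "\<dots> = 1 + t^2 * (\<Sum>i<m. q i * (g i - \<mu>)^2)"
    by (simp add: q_sum \<mu>_def)
  also have "\<dots> \<le> 1 + t^2 * (\<Sum>i<m. q i * 4)"
  proof -
    have "(\<Sum>i<m. q i * (g i - \<mu>)^2) \<le> (\<Sum>i<m. q i * 4)"
    proof (intro sum_mono mult_left_mono)
      fix i assume "i \<in> {..<m}"
      then have i: "i < m" by simp
      have "\<bar>g i - \<mu>\<bar> \<le> 2" using g_bd[OF i] mu_bd by linarith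
      then have "(g i - \<mu>)^2 \<le> 2^2" by (metis abs_le_square_iff abs_numeral)
      then show "(g i - \<mu>)^2 \<le> 4" by simp
      show "0 \<le> q i" using q_nn[OF i] .
    qed
    then show ?thesis by (simp add: mult_left_mono)
  qed
  also have "\<dots> = 1 + 4 * t^2" by (simp add: sum_distrib_right[symmetric] q_sum)
  also have "\<dots> \<le> exp (4 * t^2)" using exp_ge_add_one_self[of "4*t^2"] by simp 
  finally show ?thesis .
qed

lemma chernoff1: assumes e: "0 < \<epsilon>" "\<epsilon> \<le> 2"
  shows "(\<Sum>os\<in>{os\<in>Lists N m. (\<Sum>t\<leftarrow>os. g t) \<ge> N*\<mu> + N*\<epsilon>}. prod_list (map q os)) \<le> exp (- real N * \<epsilon>^2 / 16)"
proof -
  define t where "t = \<epsilon> / 8"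
  have t: "0 \<le> t" "t \<le> 1/2" using e by (auto simp: t_def)
  have pnn: "0 \<le> prod_list (map q os)" if "os \<in> Lists N m" for os
    using that q_nn by (intro prod_list_nonneg') (auto simp: Lists_def)
  have key: "prod_list (map q os) * exp (t * ((\<Sum>t\<leftarrow>os. g t) - N*\<mu> - N*\<epsilon>)) =
      prod_list (map (\<lambda>i. q i * exp (t * (g i - \<mu>))) os) * exp (- t * N * \<epsilon>)"
    if "os \<in> Lists N m" for os
  proof -
    have len: "length os = N" using that by (simp add: Lists_def)
    have "(\<Sum>i\<leftarrow>os. g i - \<mu>) = (\<Sum>i\<leftarrow>os. g i) - N * \<mu>"
      using len by (simp add: sum_list_subtractf sum_list_triv)
    moreover have "(\<Sum>i\<leftarrow>os. t * (g i - \<mu>)) = t * (\<Sum>i\<leftarrow>os. g i - \<mu>)"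
      by (rule sum_list_const_mult)
    ultimately have eq: "t * ((\<Sum>t\<leftarrow>os. g t) - N*\<mu> - N*\<epsilon>) = (\<Sum>i\<leftarrow>os. t * (g i - \<mu>)) + (- t * N * \<epsilon>)"
      by (simp only:) (simp add: algebra_simps)
    have "exp (t * ((\<Sum>t\<leftarrow>os. g t) - N*\<mu> - N*\<epsilon>)) = prod_list (map (\<lambda>i. exp (t * (g i - \<mu>))) os) * exp (- t * N * \<epsilon>)"
      by (simp only: eq exp_add exp_sum_list)
    then show ?thesis by (simp add: prod_list_map_mult' mult.assoc)
  qed
  have "(\<Sum>os\<in>{os\<in>Lists N m. (\<Sum>t\<leftarrow>os. g t) \<ge> N*\<mu> + N*\<epsilon>}. prod_list (map q os))
     \<le> (\<Sum>os\<in>{os\<in>Lists N m. (\<Sum>t\<leftarrow>os. g t) \<ge> N*\<mu> + N*\<epsilon>}. prod_list (map q os) * exp (t * ((\<Sum>t\<leftarrow>os. g t) - N*\<mu> - N*\<epsilon>)))"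
  proof (intro sum_mono)
    fix os assume "os \<in> {os\<in>Lists N m. (\<Sum>t\<leftarrow>os. g t) \<ge> N*\<mu> + N*\<epsilon>}"
    then have os: "os \<in> Lists N m" "(\<Sum>t\<leftarrow>os. g t) \<ge> N*\<mu> + N*\<epsilon>" by auto
    have "1 \<le> exp (t * ((\<Sum>t\<leftarrow>os. g t) - N*\<mu> - N*\<epsilon>))" using os(2) t by simp
    then show "prod_list (map q os) \<le> prod_list (map q os) * exp (t * ((\<Sum>t\<leftarrow>os. g t) - N*\<mu> - N*\<epsilon>))"
      using pnn[OF os(1)] by (simp add: mult_le_cancel_left1)
  qed
  also have "\<dots> \<le> (\<Sum>os\<in>Lists N m. prod_list (map q os) * exp (t * ((\<Sum>t\<leftarrow>os. g t) - N*\<mu> - N*\<epsilon>)))"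
    by (intro sum_mono2) (auto intro: mult_nonneg_nonneg pnn)
  also have "\<dots> = (\<Sum>os\<in>Lists N m. prod_list (map (\<lambda>i. q i * exp (t * (g i - \<mu>))) os)) * exp (- t * N * \<epsilon>)"
    by (simp add: key sum_distrib_right)
  also have "\<dots> = (\<Sum>i<m. q i * exp (t * (g i - \<mu>)))^N * exp (- t * N * \<epsilon>)"
    by (simp add: sum_prod_list)
  also have "\<dots> \<le> (exp (4 * t^2))^N * exp (- t * N * \<epsilon>)"
    by (intro mult_right_mono power_mono mgf t) (auto intro!: sum_nonneg mult_nonneg_nonneg q_nn)
  also have "\<dots> = exp (- real N * \<epsilon>^2 / 16)"
    by (simp add: exp_of_nat_mult[symmetric] exp_add[symmetric] t_def power2_eq_square field_simps)
  finally show ?thesis .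
qed

lemma chernoff2: assumes e: "0 < \<epsilon>" "\<epsilon> \<le> 2" and N: "N > 0"
  shows "(\<Sum>os\<in>{os\<in>Lists N m. \<epsilon> < \<bar>(\<Sum>t\<leftarrow>os. g t) / N - (\<Sum>t<m. q t * g t)\<bar>}. prod_list (map q os))
     \<le> 2 * exp (- real N * \<epsilon>^2 / 16)"
proof -
  interpret neg: conc m q "\<lambda>t. - g t"
    by unfold_locales (use q_nn q_sum g_bd in auto)
  have nmu: "neg.\<mu> = - \<mu>" by (simp add: neg.\<mu>_def \<mu>_def sum_negf)
  have sneg: "(\<Sum>t\<leftarrow>os. - g t) = - (\<Sum>t\<leftarrow>os. g t)" for os
    by (induction os) auto
  define A where "A = {os\<in>Lists N m. (\<Sum>t\<leftarrow>os. g t) \<ge> N*\<mu> + N*\<epsilon>}"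
  define B where "B = {os\<in>Lists N m. (\<Sum>t\<leftarrow>os. - g t) \<ge> N*neg.\<mu> + N*\<epsilon>}"
  define f where "f os = prod_list (map q os)" for os
  have fnn: "0 \<le> f os" if "os \<in> Lists N m" for os
    unfolding f_def using that q_nn by (intro prod_list_nonneg') (auto simp: Lists_def)
  have sub: "{os\<in>Lists N m. \<epsilon> < \<bar>(\<Sum>t\<leftarrow>os. g t) / N - (\<Sum>t<m. q t * g t)\<bar>} \<subseteq> A \<union> B"
  proof
    fix os assume "os \<in> {os\<in>Lists N m. \<epsilon> < \<bar>(\<Sum>t\<leftarrow>os. g t) / N - (\<Sum>t<m. q t * g t)\<bar>}"
    then have os: "os \<in> Lists N m" "\<epsilon> < \<bar>(\<Sum>t\<leftarrow>os. g t) / N - \<mu>\<bar>" by (auto simp: \<mu>_def)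
    show "os \<in> A \<union> B"
    proof (cases "(\<Sum>t\<leftarrow>os. g t) / N - \<mu> \<ge> 0")
      case True
      then have "\<epsilon> < (\<Sum>t\<leftarrow>os. g t) / N - \<mu>" using os by simp
      then have "N * \<epsilon> < N * ((\<Sum>t\<leftarrow>os. g t) / N - \<mu>)" using N by simp
      then have "N*\<mu> + N*\<epsilon> \<le> (\<Sum>t\<leftarrow>os. g t)" using N by (simp add: algebra_simps)
      then show ?thesis using os by (simp add: A_def)
    next
      case False
      then have "\<epsilon> < \<mu> - (\<Sum>t\<leftarrow>os. g t) / N" using os by simp
      then have "N * \<epsilon> < N * (\<mu> - (\<Sum>t\<leftarrow>os. g t) / N)" using N by simp
      then have "N*neg.\<mu> + N*\<epsilon> \<le> (\<Sum>t\<leftarrow>os. - g t)" using N by (simp add: algebra_simps nmu sneg)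
      then show ?thesis using os by (simp add: B_def)
    qed
  qed
  have finAB: "finite A" "finite B" by (auto simp: A_def B_def)
  have "(\<Sum>os\<in>{os\<in>Lists N m. \<epsilon> < \<bar>(\<Sum>t\<leftarrow>os. g t) / N - (\<Sum>t<m. q t * g t)\<bar>}. f os) \<le> (\<Sum>os\<in>A \<union> B. f os)"
    by (rule sum_mono2) (use finAB sub fnn in \<open>auto simp: A_def B_def\<close>)
  also have "\<dots> \<le> (\<Sum>os\<in>A. f os) + (\<Sum>os\<in>B. f os)"
  proof -
    have "(\<Sum>os\<in>A \<union> B. f os) = (\<Sum>os\<in>A. f os) + (\<Sum>os\<in>B. f os) - (\<Sum>os\<in>A \<inter> B. f os)"
      using sum_Un[OF finAB, of f] by simp
    moreover have "0 \<le> (\<Sum>os\<in>A \<inter> B. f os)" by (intro sum_nonneg fnn) (auto simp: A_def)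
    ultimately show ?thesis by linarith
  qed
  also have "\<dots> \<le> exp (- real N * \<epsilon>^2 / 16) + exp (- real N * \<epsilon>^2 / 16)"
    unfolding A_def B_def f_def by (intro add_mono chernoff1 neg.chernoff1 e)
  finally show ?thesis by (simp add: f_def)
qed

end

lemma sum_Union_le:
  fixes f :: "'a \<Rightarrow> real"
  assumes "finite I" "\<forall>i\<in>I. finite (B i)" "\<forall>i\<in>I. \<forall>x\<in>B i. 0 \<le> f x"
  shows "(\<Sum>x\<in>(\<Union>i\<in>I. B i). f x) \<le> (\<Sum>i\<in>I. \<Sum>x\<in>B i. f x)"
  using assms
proof (induction I rule: finite_induct)
  case empty then show ?case by simp
next
  case (insert j I)
  have fin: "finite (B j)" "finite (\<Union>i\<in>I. B i)" using insert by auto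
  have "(\<Sum>x\<in>(\<Union>i\<in>insert j I. B i). f x) = (\<Sum>x\<in>B j \<union> (\<Union>i\<in>I. B i). f x)" by simp
  also have "\<dots> = (\<Sum>x\<in>B j. f x) + (\<Sum>x\<in>(\<Union>i\<in>I. B i). f x) - (\<Sum>x\<in>B j \<inter> (\<Union>i\<in>I. B i). f x)"
    using sum_Un[OF fin, of f] by simp
  also have "\<dots> \<le> (\<Sum>x\<in>B j. f x) + (\<Sum>x\<in>(\<Union>i\<in>I. B i). f x)"
  proof -
    have "0 \<le> (\<Sum>x\<in>B j \<inter> (\<Union>i\<in>I. B i). f x)"
      using insert.prems by (intro sum_nonneg) auto
    then show ?thesis by linarith
  qed
  also have "\<dots> \<le> (\<Sum>x\<in>B j. f x) + (\<Sum>i\<in>I. \<Sum>x\<in>B i. f x)"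
    using insert by simp
  finally show ?case using insert by simp
qed

definition Ef :: "nat \<Rightarrow> nat \<Rightarrow> nat list \<Rightarrow> bool list \<Rightarrow> real" where
  "Ef n N os a = (\<Sum>t\<leftarrow>os. fa n a (enum n ! t)) / N / 2^(length a div 2)"

definition est :: "nat \<Rightarrow> nat \<Rightarrow> nat list \<Rightarrow> bool list \<Rightarrow> real" where
  "est n N os pre = (if even (length pre) then Ef n N os pre
                     else Ef n N os (pre@[False]) + Ef n N os (pre@[True]))"

lemma sum_enum: "(\<Sum>t<4^n. F (enum n ! t)) = (\<Sum>x\<in>L n. F x)"
proof -
  have "(\<Sum>x\<in>L n. F x) = sum_list (map F (enum n))"
    by (simp add: sum_list_distinct_conv_sum_set[OF distinct_enum] set_enum)
  also have "\<dots> = (\<Sum>t<4^n. F (enum n ! t))"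
    by (simp add: sum_list_sum_nth length_enum atLeast0LessThan)
  finally show ?thesis by simp
qed

lemma enum_L: "t < 4^n \<Longrightarrow> enum n ! t \<in> L n"
  by (metis set_enum length_enum nth_mem)

definition Apre :: "nat \<Rightarrow> bool list set" where "Apre n = (\<Union>k\<in>{1..n}. L k)"

lemma card_L: "card (L k) = 4^k"
proof -
  have eq: "L k = {xs. set xs \<subseteq> (UNIV::bool set) \<and> length xs = 2*k}" by (auto simp: L_def)
  have "card {xs. set xs \<subseteq> (UNIV::bool set) \<and> length xs = 2*k} = card (UNIV::bool set) ^ (2*k)"
    by (rule card_lists_length_eq) simp
  then have "card (L k) = 2 ^ (2*k)" unfolding eq by simp
  also have "(2::nat) ^ (2*k) = 4^k" by (simp add: power_mult)
  finally show ?thesis .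
qed

lemma card_Apre: "card (Apre n) \<le> 8^n"
proof -
  have "card (Apre n) \<le> (\<Sum>k\<in>{1..n}. card (L k))" unfolding Apre_def by (rule card_UN_le) simp
  also have "\<dots> \<le> (\<Sum>k\<in>{1..n}. 4^n)" unfolding card_L by (intro sum_mono power_increasing) auto
  also have "\<dots> = n * 4^n" by simp
  also have "\<dots> \<le> 2^n * 4^n" by (intro mult_right_mono) (auto intro: less_imp_le less_exp)
  also have "\<dots> = 8^n" by (simp add: power_mult_distrib[symmetric])
  finally show ?thesis .
qed

lemma finite_Apre: "finite (Apre n)" by (simp add: Apre_def)

lemma main_bound:
  fixes N :: nat and \<epsilon> :: real
  assumes pure: "pure_state n \<psi>" and e: "0 < \<epsilon>"
  defines "q \<equiv> outcome_prob (Ms n) \<psi>"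
  defines "G \<equiv> \<lambda>a t. fa n a (enum n ! t)"
  defines "Bad \<equiv> \<lambda>a. {os\<in>Lists N (4^n). \<epsilon> < \<bar>(\<Sum>t\<leftarrow>os. G a t) / N - (\<Sum>t<4^n. q t * G a t)\<bar>}"
  shows "success_prob n \<epsilon> N (Ms n) (est n N) \<psi> \<ge> 1 - (\<Sum>a\<in>Apre n. \<Sum>os\<in>Bad a. prod_list (map q os))"
    and "\<And>a. a \<in> Apre n \<Longrightarrow> conc (4^n) q (G a)"
proof -
  have psi: "\<psi> \<in> carrier_vec (2^n)" using pure by (simp add: pure_state_def)
  have q_eq: "q t = prob n \<psi> (enum n ! t)" if "t < 4^n" for t
    unfolding q_def using outcome[OF psi that] .
  have q_nn: "0 \<le> q t" if "t < 4^n" for t using q_eq[OF that] prob_nonneg by simp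
  have q_sum: "(\<Sum>t<4^n. q t) = 1"
    using sum_enum[of "prob n \<psi>" n] prob_sum[OF pure] q_eq by simp
  have la: "\<exists>k. length a = 2*k \<and> 1 \<le> k \<and> k \<le> n" if "a \<in> Apre n" for a
    using that by (auto simp: Apre_def L_def)
  show conc: "conc (4^n) q (G a)" if a: "a \<in> Apre n" for a
  proof
    show "\<And>t. t < 4^n \<Longrightarrow> 0 \<le> q t" by (rule q_nn)
    show "(\<Sum>t<4^n. q t) = 1" by (rule q_sum)
    fix t :: nat assume t: "t < 4^n"
    obtain k where k: "length a = 2*k" "k \<le> n" using la[OF a] by auto
    show "\<bar>G a t\<bar> \<le> 1" unfolding G_def by (rule fa_bound[OF enum_L[OF t] k])
  qed
  have mu: "(\<Sum>t<4^n. q t * G a t) = 2^k * pauli_marginal n \<psi> a" if "length a = 2*k" "k \<le> n" for a k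
  proof -
    have "(\<Sum>t<4^n. q t * G a t) = (\<Sum>t<4^n. prob n \<psi> (enum n ! t) * fa n a (enum n ! t))"
      by (intro sum.cong refl) (simp add: q_eq G_def)
    also have "\<dots> = (\<Sum>x\<in>L n. prob n \<psi> x * fa n a x)" by (rule sum_enum)
    also have "\<dots> = 2^k * pauli_marginal n \<psi> a" using marg_even[OF psi that] by simp
    finally show ?thesis .
  qed
  define Good where "Good = {os. length os = N \<and> set os \<subseteq> {..<length (Ms n)} \<and> good_estimates n \<epsilon> \<psi> (est n N os)}"
  have lenMs: "length (Ms n) = 4^n" by (simp add: Ms_def length_enum)
  have GoodL: "Good \<subseteq> Lists N (4^n)" by (auto simp: Good_def Lists_def lenMs)
  have good: "os \<in> Good" if os: "os \<in> Lists N (4^n)" and nb: "\<forall>a\<in>Apre n. os \<notin> Bad a" for os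
  proof -
    have close: "\<bar>Ef n N os a - pauli_marginal n \<psi> a\<bar> \<le> \<epsilon> / 2^k"
      if "length a = 2*k" "1 \<le> k" "k \<le> n" for a k
    proof -
      have aA: "a \<in> Apre n" using that by (auto simp: Apre_def L_def)
      have "\<not> \<epsilon> < \<bar>(\<Sum>t\<leftarrow>os. G a t) / N - (\<Sum>t<4^n. q t * G a t)\<bar>"
        using nb aA os by (auto simp: Bad_def)
      then have 1: "\<bar>(\<Sum>t\<leftarrow>os. G a t) / N - 2^k * pauli_marginal n \<psi> a\<bar> \<le> \<epsilon>"
        using mu[OF that(1) that(3)] by simp
      have "Ef n N os a - pauli_marginal n \<psi> a = ((\<Sum>t\<leftarrow>os. G a t) / N - 2^k * pauli_marginal n \<psi> a) / 2^k"
        using that(1) by (simp add: Ef_def G_def field_simps)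
      then have "\<bar>Ef n N os a - pauli_marginal n \<psi> a\<bar> = \<bar>(\<Sum>t\<leftarrow>os. G a t) / N - 2^k * pauli_marginal n \<psi> a\<bar> / 2^k"
        by simp
      also have "\<dots> \<le> \<epsilon> / 2^k" using 1 by (simp add: divide_right_mono)
      finally show ?thesis .
    qed
    have "good_estimates n \<epsilon> \<psi> (est n N os)"
      unfolding good_estimates_def
    proof (intro ballI conjI allI impI)
      fix k :: nat and pre :: "bool list" assume k: "k \<in> {1..n}" and lp: "length pre = 2*k"
      then show "\<bar>est n N os pre - pauli_marginal n \<psi> pre\<bar> \<le> \<epsilon> / 2^k"
        using close[of pre k] by (simp add: est_def)
    next
      fix k :: nat and pre :: "bool list" assume k: "k \<in> {1..n}" and lp: "length pre = 2*k - 1"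
      have l1: "length (pre@[False]) = 2*k" "length (pre@[True]) = 2*k" using k lp by auto
      have odd: "\<not> even (length pre)" using k lp by auto
      have split: "pauli_marginal n \<psi> pre = pauli_marginal n \<psi> (pre@[False]) + pauli_marginal n \<psi> (pre@[True])"
        by (rule marg_split) (use k lp in auto)
      have "\<bar>est n N os pre - pauli_marginal n \<psi> pre\<bar> =
          \<bar>(Ef n N os (pre@[False]) - pauli_marginal n \<psi> (pre@[False])) +
           (Ef n N os (pre@[True]) - pauli_marginal n \<psi> (pre@[True]))\<bar>"
        unfolding est_def split using odd by simp
      also have "\<dots> \<le> \<epsilon> / 2^k + \<epsilon> / 2^k"
        using close[OF l1(1)] close[OF l1(2)] k by (intro order.trans[OF abs_triangle_ineq] add_mono) auto
      finally show "\<bar>est n N os pre - pauli_marginal n \<psi> pre\<bar> \<le> 2 * \<epsilon> / 2^k" by simp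
    qed
    then show ?thesis using os by (auto simp: Good_def Lists_def lenMs)
  qed
  define f where "f os = prod_list (map q os)" for os
  have fnn: "0 \<le> f os" if "os \<in> Lists N (4^n)" for os
    unfolding f_def using that q_nn by (intro prod_list_nonneg') (auto simp: Lists_def)
  have tot: "(\<Sum>os\<in>Lists N (4^n). f os) = 1"
    unfolding f_def sum_prod_list q_sum by simp
  have sub: "Lists N (4^n) - Good \<subseteq> (\<Union>a\<in>Apre n. Bad a)" using good by blast
  have "(\<Sum>os\<in>Lists N (4^n) - Good. f os) \<le> (\<Sum>os\<in>(\<Union>a\<in>Apre n. Bad a). f os)"
    by (rule sum_mono2) (use sub fnn finite_Apre in \<open>auto simp: Bad_def\<close>)
  also have "\<dots> \<le> (\<Sum>a\<in>Apre n. \<Sum>os\<in>Bad a. f os)"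
    by (rule sum_Union_le) (use fnn finite_Apre in \<open>auto simp: Bad_def\<close>)
  finally have badb: "(\<Sum>os\<in>Lists N (4^n) - Good. f os) \<le> (\<Sum>a\<in>Apre n. \<Sum>os\<in>Bad a. f os)" .
  have "(\<Sum>os\<in>Lists N (4^n). f os) = (\<Sum>os\<in>Lists N (4^n) - Good. f os) + (\<Sum>os\<in>Good. f os)"
    using sum.subset_diff[OF GoodL finite_Lists] by simp
  then have "success_prob n \<epsilon> N (Ms n) (est n N) \<psi> = 1 - (\<Sum>os\<in>Lists N (4^n) - Good. f os)"
    using tot by (simp add: success_prob_def Good_def[symmetric] f_def q_def)
  then show "success_prob n \<epsilon> N (Ms n) (est n N) \<psi> \<ge> 1 - (\<Sum>a\<in>Apre n. \<Sum>os\<in>Bad a. prod_list (map q os))"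
    using badb by (simp add: f_def)
qed

lemma ln16: "ln (16::real) = 4 * ln 2"
proof -
  have "ln ((2::real)^4) = real 4 * ln 2" using ln_realpow[of "2::real" 4] by simp
  then show ?thesis by simp
qed

lemma final_arith:
  assumes n: "n \<ge> 1" and d: "0 < \<delta>" "\<delta> < 1/2" and X: "X \<ge> 5 * real n * ln (1/\<delta>)"
  shows "8^n * (2 * exp (- X)) \<le> \<delta>"
proof -
  define L where "L = ln (1/\<delta>)"
  have L2: "ln 2 < L" unfolding L_def using d by (intro ln_less_cancel_iff[THEN iffD2]) (auto simp: field_simps)
  have "(0::real) < ln 2" by (rule ln_gt_zero) simp
  then have Lpos: "0 < L" using L2 by linarith
  have eL: "exp (- L) = \<delta>" unfolding L_def using d by (simp add: ln_div)
  have "(2::real) * 8^n \<le> 16^n"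
  proof -
    have "(16::real)^n = 8^n * 2^n" by (simp add: power_mult_distrib[symmetric])
    moreover have "(2::real) \<le> 2^n" using n by (metis power_one_right power_increasing one_le_numeral)
    ultimately show ?thesis by simp
  qed
  also have "(16::real)^n = exp (real n * ln 16)" by (simp add: exp_of_nat_mult)
  finally have a: "2 * 8^n \<le> exp (real n * (4 * ln 2))" by (simp add: ln16)
  have b: "exp (- X) \<le> exp (- (5 * real n * L))" using X by (simp add: L_def)
  have "8^n * (2 * exp (- X)) \<le> exp (real n * (4 * ln 2)) * exp (- (5 * real n * L))"
    using a b by (simp add: mult.assoc[symmetric]) (intro mult_mono, auto)
  also have "\<dots> = exp (real n * (4 * ln 2) - 5 * real n * L)" by (simp add: exp_diff exp_minus field_simps)
  also have "\<dots> \<le> exp (- L)"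
  proof -
    have h1: "real n * ln 2 \<le> real n * L" using L2 n by (intro mult_left_mono) auto
    have h2: "L \<le> real n * L" using n Lpos by simp
    have h3: "real n * (4 * ln 2) - 5 * real n * L = 4 * (real n * ln 2) - 5 * (real n * L)"
      by (simp add: algebra_simps)
    have "real n * (4 * ln 2) - 5 * real n * L \<le> - L" using h1 h2 h3 by linarith
    then show ?thesis by simp
  qed
  finally show ?thesis using eL by simp
qed

theorem corollary3:
  shows "\<exists>C > 0. \<forall>(n::nat) (\<epsilon>::real) (\<delta>::real) (N::nat).
           \<epsilon> > 0 \<longrightarrow> 0 < \<delta> \<longrightarrow> \<delta> < 1/2 \<longrightarrow>
           real N \<ge> C * real n * ln (1 / \<delta>) / \<epsilon> ^ 2 \<longrightarrow>
           (\<exists>Ms est. is_povm (4 ^ n) Ms \<and>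
              (\<forall>\<psi>. pure_state n \<psi> \<longrightarrow> success_prob n \<epsilon> N Ms est \<psi> \<ge> 1 - \<delta>))"
proof (intro exI[of _ 80] conjI allI impI)
  show "(0::real) < 80" by simp
next
  fix n :: nat and \<epsilon> \<delta> :: real and N :: nat
  assume e: "\<epsilon> > 0" and d: "0 < \<delta>" "\<delta> < 1/2" and NN: "real N \<ge> 80 * real n * ln (1 / \<delta>) / \<epsilon> ^ 2"
  show "\<exists>Ms est. is_povm (4 ^ n) Ms \<and> (\<forall>\<psi>. pure_state n \<psi> \<longrightarrow> success_prob n \<epsilon> N Ms est \<psi> \<ge> 1 - \<delta>)"
  proof (intro exI conjI allI impI)
    show "is_povm (4^n) (Ms n)" by (rule povm)
    fix \<psi> assume pure: "pure_state n \<psi>"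
    define q where "q = outcome_prob (Ms n) \<psi>"
    define G where "G = (\<lambda>a t. fa n a (enum n ! t))"
    define Bad where "Bad = (\<lambda>a. {os\<in>Lists N (4^n). \<epsilon> < \<bar>(\<Sum>t\<leftarrow>os. G a t) / N - (\<Sum>t<4^n. q t * G a t)\<bar>})"
    have mb: "success_prob n \<epsilon> N (Ms n) (est n N) \<psi> \<ge> 1 - (\<Sum>a\<in>Apre n. \<Sum>os\<in>Bad a. prod_list (map q os))"
      using main_bound(1)[OF pure e] by (simp add: q_def G_def Bad_def)
    have cc: "conc (4^n) q (G a)" if "a \<in> Apre n" for a
      using main_bound(2)[OF pure e that] by (simp add: q_def G_def)
    have "(\<Sum>a\<in>Apre n. \<Sum>os\<in>Bad a. prod_list (map q os)) \<le> \<delta>"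
    proof (cases "n = 0")
      case True
      then have "Apre n = {}" by (simp add: Apre_def)
      then show ?thesis using d by simp
    next
      case False
      then have n: "n \<ge> 1" by simp
      define L where "L = ln (1/\<delta>)"
      have Lpos: "0 < L" unfolding L_def using d by simp
      have NX: "real N * \<epsilon>^2 \<ge> 80 * real n * L" using NN e by (simp add: L_def field_simps)
      have "80 * real n * L > 0" using n Lpos by simp
      then have "real N * \<epsilon>^2 > 0" using NX by linarith
      then have Npos: "N > 0" by (cases N) auto
      have each: "(\<Sum>os\<in>Bad a. prod_list (map q os)) \<le> 2 * exp (- real N * \<epsilon>^2 / 16)" if a: "a \<in> Apre n" for a
      proof (cases "\<epsilon> \<le> 2")
        case True
        then show ?thesis unfolding Bad_def by (rule conc.chernoff2[OF cc[OF a] e _ Npos])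
      next
        case False
        have "Bad a = {}"
        proof -
          interpret c: conc "4^n" q "G a" by (rule cc[OF a])
          have "\<not> \<epsilon> < \<bar>(\<Sum>t\<leftarrow>os. G a t) / N - (\<Sum>t<4^n. q t * G a t)\<bar>" if os: "os \<in> Lists N (4^n)" for os
          proof -
            have h: "\<And>t. t \<in> set os \<Longrightarrow> \<bar>G a t\<bar> \<le> 1" using os c.g_bd by (auto simp: Lists_def)
            have "\<bar>\<Sum>t\<leftarrow>os. G a t\<bar> \<le> (\<Sum>t\<leftarrow>os. \<bar>G a t\<bar>)"
              using sum_list_abs[of "map (G a) os"] by (simp add: comp_def)
            also have "\<dots> \<le> (\<Sum>t\<leftarrow>os. 1)" by (rule sum_list_mono[OF h])
            also have "\<dots> = N" using os by (simp add: Lists_def sum_list_triv)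
            finally have "\<bar>(\<Sum>t\<leftarrow>os. G a t) / N\<bar> \<le> 1" using Npos by (simp add: divide_le_eq_1)
            moreover have "\<bar>\<Sum>t<4^n. q t * G a t\<bar> \<le> 1" using c.mu_bd by (simp add: c.\<mu>_def)
            ultimately show ?thesis using False by linarith
          qed
          then show ?thesis by (auto simp: Bad_def)
        qed
        then show ?thesis by simp
      qed
      have "(\<Sum>a\<in>Apre n. \<Sum>os\<in>Bad a. prod_list (map q os)) \<le> (\<Sum>a\<in>Apre n. 2 * exp (- real N * \<epsilon>^2 / 16))"
        by (intro sum_mono each)
      also have "\<dots> = card (Apre n) * (2 * exp (- real N * \<epsilon>^2 / 16))" by simp
      also have "\<dots> \<le> 8^n * (2 * exp (- real N * \<epsilon>^2 / 16))"
      proof -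
        have "real (card (Apre n)) \<le> 8^n" using card_Apre[of n] by (metis of_nat_le_iff of_nat_numeral of_nat_power)
        then show ?thesis by (intro mult_right_mono) auto
      qed
      also have "\<dots> \<le> \<delta>"
      proof -
        have "- real N * \<epsilon>^2 / 16 = - (real N * \<epsilon>^2 / 16)" by simp
        moreover have "real N * \<epsilon>^2 / 16 \<ge> 5 * real n * ln (1/\<delta>)" using NX by (simp add: L_def)
        ultimately show ?thesis using final_arith[OF n d] by simp
      qed
      finally show ?thesis .
    qed
    then show "success_prob n \<epsilon> N (Ms n) (est n N) \<psi> \<ge> 1 - \<delta>" using mb by linarith
  qed
qed

end
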